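(* Let $r,s,N$ be integers with $N\ge 1$, let $F=\{(x,y)\in\mathbb{Z}^2: x\ge r,\ y\le s+N,\ x-y\le r-s\}$ and $D=\{(x,y)\in\mathbb{Z}^2: r-s-N\le x-y\le r-s\}$. Let $t$ be a partial $\mathrm{SL}_2$-tiling defined on $F$ such that $t_{xy}=1$ for all $(x,y)\in F$ with $x-y=r-s$, and $t_{r,s+N}=1$. Then there is a friese defined on $D$ which agrees with $t$ on $F$.
   Context: A partial $\mathrm{SL}_2$-tiling defined on $E\subseteq\mathbb{Z}^2$ is a map $t:E\to\{1,2,3,\dots\}$ such that $t_{xy}t_{x+1,y+1}-t_{x,y+1}t_{x+1,y}=1$ whenever all four points $(x,y),(x,y+1),(x+1,y),(x+1,y+1)$ lie in $E$. For integers $c<c'$, a friese on the diagonal band $D=\{(x,y)\in\mathbb{Z}^2: c\le x-y\le c'\}$ is a partial $\mathrm{SL}_2$-tiling defined on $D$ with $t_{xy}=1$ whenever $x-y=c$ or $x-y=c'$. *)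

theory Defs
  imports Main
begin

definition partial_SL2_tiling :: "(int \<times> int) set \<Rightarrow> (int \<Rightarrow> int \<Rightarrow> int) \<Rightarrow> bool" where
  "partial_SL2_tiling E t \<longleftrightarrow>
     (\<forall>(x, y) \<in> E. t x y \<ge> 1) \<and>
     (\<forall>x y. (x, y) \<in> E \<and> (x, y + 1) \<in> E \<and> (x + 1, y) \<in> E \<and> (x + 1, y + 1) \<in> E \<longrightarrow>
        t x y * t (x + 1) (y + 1) - t x (y + 1) * t (x + 1) y = 1)"

definition diag_band :: "int \<Rightarrow> int \<Rightarrow> (int \<times> int) set" where
  "diag_band c c' = {(x, y). c \<le> x - y \<and> x - y \<le> c'}"

definition friese :: "int \<Rightarrow> int \<Rightarrow> (int \<Rightarrow> int \<Rightarrow> int) \<Rightarrow> bool" where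
  "friese c c' t \<longleftrightarrow> c < c' \<and> partial_SL2_tiling (diag_band c c') t \<and>
     (\<forall>x y. (x - y = c \<or> x - y = c') \<longrightarrow> t x y = 1)"

end

theory Submission
  imports Defs
begin

definition d2 :: "int \<times> int \<Rightarrow> int \<times> int \<Rightarrow> int" where
  "d2 a b = fst a * snd b - snd a * fst b"

definition negv :: "int \<times> int \<Rightarrow> int \<times> int" where
  "negv a = (- fst a, - snd a)"

lemma d2_self[simp]: "d2 a a = 0" by (simp add: d2_def)
lemma d2_anti: "d2 a b = - d2 b a" by (simp add: d2_def)
lemma d2_anti': "- d2 a b = d2 b a" by (simp add: d2_def)
lemma d2_negl[simp]: "d2 (negv a) b = - d2 a b" by (simp add: d2_def negv_def)
lemma d2_negr[simp]: "d2 a (negv b) = - d2 a b" by (simp add: d2_def negv_def)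
lemma pluecker: "d2 a b * d2 c e - d2 a e * d2 c b = d2 a c * d2 b e"
  by (simp add: d2_def algebra_simps)

lemma periodic_all:
  fixes m :: int
  assumes "m > 0" and per: "\<And>k. P (k + m) = P k" and base: "\<And>k. 0 \<le> k \<Longrightarrow> k < m \<Longrightarrow> P k"
  shows "P k"
proof -
  have gen: "P (a + j * m) = P a" for a j :: int
  proof (induct j rule: int_induct[where k=0])
    case base then show ?case by simp
  next
    case (step1 i)
    have "a + (i + 1) * m = (a + i * m) + m" by (simp add: algebra_simps)
    then show ?case using step1 per[of "a + i * m"] by (simp add: add.assoc)
  next
    case (step2 i)
    have "a + i * m = (a + (i - 1) * m) + m" by (simp add: algebra_simps)
    then show ?case using step2 per by metis
  qed
  have "k = k mod m + (k div m) * m" by simp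
  then have "P k = P (k mod m)" using gen by metis
  moreover have "P (k mod m)" using base assms(1) by simp
  ultimately show ?thesis by simp
qed

fun vv :: "(nat \<Rightarrow> int) \<Rightarrow> nat \<Rightarrow> int \<times> int" where
  "vv a 0 = (1, 0)"
| "vv a (Suc 0) = (0, 1)"
| "vv a (Suc (Suc k)) = (a (Suc k) * fst (vv a (Suc k)) - fst (vv a k),
                        a (Suc k) * snd (vv a (Suc k)) - snd (vv a k))"

lemma vv_consec: "d2 (vv a k) (vv a (Suc k)) = 1"
proof (induct k)
  case 0 then show ?case by (simp add: d2_def)
next
  case (Suc k)
  then show ?case by (simp add: d2_def algebra_simps)
qed

lemma vv_two: "d2 (vv a k) (vv a (Suc (Suc k))) = a (Suc k)"
  using vv_consec[of a k] by (simp add: d2_def algebra_simps)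

lemma frieze_core:
  fixes T :: "nat \<Rightarrow> nat \<Rightarrow> int" and n :: nat
  assumes H1: "\<And>p q. p < q \<Longrightarrow> q \<le> n + 1 \<Longrightarrow> T p q \<ge> 1"
    and H2: "\<And>p. p + 1 \<le> n + 1 \<Longrightarrow> T p (p + 1) = 1"
    and H3: "\<And>p q. p + 1 < q \<Longrightarrow> q + 1 \<le> n + 1 \<Longrightarrow>
               T p q * T (p + 1) (q + 1) - T p (q + 1) * T (p + 1) q = 1"
  defines "a \<equiv> \<lambda>k. T (k - 1) (k + 1)"
  shows "p < q \<Longrightarrow> q \<le> n + 1 \<Longrightarrow> d2 (vv a p) (vv a q) = T p q"
proof -
  have main: "\<forall>p q. q = p + d \<longrightarrow> 0 < d \<longrightarrow> q \<le> n + 1 \<longrightarrow> d2 (vv a p) (vv a q) = T p q" for d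
  proof (induct d rule: less_induct)
    case (less d)
    show ?case
    proof (intro allI impI)
      fix p q assume q: "q = p + d" and d: "0 < d" and qn: "q \<le> n + 1"
      consider "d = 1" | "d = 2" | "d \<ge> 3" using d by linarith
      then show "d2 (vv a p) (vv a q) = T p q"
      proof cases
        case 1 then show ?thesis using q qn H2[of p] vv_consec[of a p] by simp
      next
        case 2 then show ?thesis using q vv_two[of a p] by (simp add: a_def)
      next
        case 3
        define q' where "q' = q - 1"
        have q'': "q = q' + 1" using q 3 unfolding q'_def by simp
        have sq: "T p q' * T (p + 1) (q' + 1) - T p (q' + 1) * T (p + 1) q' = 1"
          using H3[of p q'] q 3 qn q'' by simp
        have IH1: "\<forall>p q. q = p + (d - 1) \<longrightarrow> 0 < d - 1 \<longrightarrow> q \<le> n + 1 \<longrightarrow> d2 (vv a p) (vv a q) = T p q"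
          using less[of "d - 1"] 3 by simp
        have IH2: "\<forall>p q. q = p + (d - 2) \<longrightarrow> 0 < d - 2 \<longrightarrow> q \<le> n + 1 \<longrightarrow> d2 (vv a p) (vv a q) = T p q"
          using less[of "d - 2"] 3 by simp
        have e1: "d2 (vv a p) (vv a q') = T p q'"
          proof -
          have "q' = p + (d - 1)" "0 < d - 1" "q' \<le> n + 1" using q 3 qn q'' by auto
          then show ?thesis using IH1 by blast
        qed
        have e2: "d2 (vv a (p+1)) (vv a (q'+1)) = T (p+1) (q'+1)"
          proof -
          have "q'+1 = (p+1) + (d - 1)" "0 < d - 1" "q'+1 \<le> n + 1" using q 3 qn q'' by auto
          then show ?thesis using IH1 by blast
        qed
        have e3: "d2 (vv a (p+1)) (vv a q') = T (p+1) q'"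
          proof -
          have "q' = (p+1) + (d - 2)" "0 < d - 2" "q' \<le> n + 1" using q 3 qn q'' by auto
          then show ?thesis using IH2 by blast
        qed
        have pl: "d2 (vv a p) (vv a q') * d2 (vv a (p+1)) (vv a (q'+1))
                 - d2 (vv a p) (vv a (q'+1)) * d2 (vv a (p+1)) (vv a q') = 1"
          using pluecker[of "vv a p" "vv a q'" "vv a (p+1)" "vv a (q'+1)"]
            vv_consec[of a p] vv_consec[of a q'] by simp
        have pos: "T (p+1) q' \<ge> 1" using H1[of "p+1" q'] q 3 qn q'' by simp
        have "d2 (vv a p) (vv a (q'+1)) * T (p+1) q' = T p (q'+1) * T (p+1) q'"
        proof -
          have pl': "T p q' * T (p+1) (q'+1) - d2 (vv a p) (vv a (q'+1)) * T (p+1) q' = 1"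
            using pl e1 e2 e3 by simp
          show ?thesis using pl' sq by linarith
        qed
        then have "d2 (vv a p) (vv a (q'+1)) = T p (q'+1)" using pos by simp
        then show ?thesis using q'' by simp
      qed
    qed
  qed
  assume "p < q" "q \<le> n + 1"
  then show ?thesis proof -
    have "q = p + (q - p)" "0 < q - p" using \<open>p < q\<close> by auto
    then show ?thesis using main[of "q - p"] \<open>q \<le> n + 1\<close> by blast
  qed
qed

definition Vf :: "(nat \<Rightarrow> int) \<Rightarrow> int \<Rightarrow> int \<Rightarrow> int \<times> int" where
  "Vf a m k = (if even (k div m) then vv a (nat (k mod m)) else negv (vv a (nat (k mod m))))"

lemma negv_negv[simp]: "negv (negv v) = v" by (simp add: negv_def)

lemma Vf_shift: "m > 0 \<Longrightarrow> Vf a m (k + m) = negv (Vf a m k)"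
proof -
  assume m: "m > 0"
  have "(k + m) div m = k div m + 1" using m by (simp add: div_add_self2)
  moreover have "(k + m) mod m = k mod m" by simp
  ultimately show ?thesis by (simp add: Vf_def)
qed

lemma Vf_base: "0 \<le> k \<Longrightarrow> k < m \<Longrightarrow> Vf a m k = vv a (nat k)"
  by (simp add: Vf_def)

theorem lemma7p1:
  fixes r s N :: int and t :: "int \<Rightarrow> int \<Rightarrow> int"
  assumes "N \<ge> 1"
    and "F = {(x, y). x \<ge> r \<and> y \<le> s + N \<and> x - y \<le> r - s}"
    and "D = {(x, y). r - s - N \<le> x - y \<and> x - y \<le> r - s}"
    and "partial_SL2_tiling F t"
    and "\<forall>(x, y) \<in> F. x - y = r - s \<longrightarrow> t x y = 1"
    and "t r (s + N) = 1"
  shows "\<exists>u. friese (r - s - N) (r - s) u \<and> diag_band (r - s - N) (r - s) = D \<and>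
             (\<forall>(x, y) \<in> F. u x y = t x y)"
proof -
  define n where "n = nat N"
  have Nn: "N = int n" using assms(1) unfolding n_def by simp
  define T where "T = (\<lambda>p q. t (r + int p) (s - 1 + int q))"
  define a where "a = (\<lambda>k. T (k - 1) (k + 1))"
  define m where "m = int n + 2"
  define V where "V = Vf a m"
  have m0: "m > 0" unfolding m_def by simp
  have inF: "(r + int p, s - 1 + int q) \<in> F" if "p < q" "q \<le> n + 1" for p q
    using that assms(2) Nn by auto
  have posF: "\<And>x y. (x, y) \<in> F \<Longrightarrow> t x y \<ge> 1"
    using assms(4) unfolding partial_SL2_tiling_def by fast
  have ruleF: "\<And>x y. (x, y) \<in> F \<Longrightarrow> (x, y + 1) \<in> F \<Longrightarrow> (x + 1, y) \<in> F \<Longrightarrow> (x + 1, y + 1) \<in> F \<Longrightarrow>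
        t x y * t (x + 1) (y + 1) - t x (y + 1) * t (x + 1) y = 1"
    using assms(4) unfolding partial_SL2_tiling_def by blast
  have H1: "T p q \<ge> 1" if "p < q" "q \<le> n + 1" for p q
    using posF[OF inF[OF that]] unfolding T_def .
  have H2: "T p (p + 1) = 1" if "p + 1 \<le> n + 1" for p
  proof -
    have "(r + int p, s - 1 + int (p + 1)) \<in> F" using inF[of p "p+1"] that by simp
    then show ?thesis using assms(5) unfolding T_def by auto
  qed
  have H3: "T p q * T (p + 1) (q + 1) - T p (q + 1) * T (p + 1) q = 1"
    if "p + 1 < q" "q + 1 \<le> n + 1" for p q
  proof -
    let ?x = "r + int p" and ?y = "s - 1 + int q"
    have e: "?x + 1 = r + int (p + 1)" "?y + 1 = s - 1 + int (q + 1)" by simp_all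
    have "(?x, ?y) \<in> F" "(?x, ?y + 1) \<in> F" "(?x + 1, ?y) \<in> F" "(?x + 1, ?y + 1) \<in> F"
      unfolding e using inF[of p q] inF[of p "q+1"] inF[of "p+1" q] inF[of "p+1" "q+1"] that
      by simp_all
    then have "t ?x ?y * t (?x + 1) (?y + 1) - t ?x (?y + 1) * t (?x + 1) ?y = 1"
      by (rule ruleF)
    then show ?thesis unfolding T_def e .
  qed
  have H4: "T 0 (n + 1) = 1" using assms(6) Nn unfolding T_def by (simp add: algebra_simps)
  have W: "d2 (V i) (V j) = T (nat i) (nat j)" if "0 \<le> i" "i < j" "j < m" for i j
  proof -
    have "V i = vv a (nat i)" "V j = vv a (nat j)" using that Vf_base unfolding V_def by auto
    moreover have "nat i < nat j" "nat j \<le> n + 1" using that unfolding m_def by auto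
    ultimately show ?thesis
      using frieze_core[of n T, OF H1 H2 H3] unfolding a_def by auto
  qed
  have Vs: "V (k + m) = negv (V k)" for k unfolding V_def using Vf_shift m0 by simp
  have A: "d2 (V k) (V (k + 1)) = 1" for k
  proof (rule periodic_all[OF m0, where P = "\<lambda>k. d2 (V k) (V (k + 1)) = 1"])
    fix k show "(d2 (V (k + m)) (V (k + m + 1)) = 1) = (d2 (V k) (V (k + 1)) = 1)"
    proof -
      have "k + m + 1 = (k + 1) + m" by simp
      then show ?thesis by (simp only: Vs d2_negl d2_negr minus_minus)
    qed
  next
    fix k assume k: "0 \<le> k" "k < m"
    show "d2 (V k) (V (k + 1)) = 1"
    proof (cases "k + 1 < m")
      case True
      then have "d2 (V k) (V (k + 1)) = T (nat k) (nat k + 1)" using W[of k "k+1"] k by (simp add: nat_add_distrib)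
      then show ?thesis using H2[of "nat k"] True unfolding m_def by simp
    next
      case False
      then have kk: "k + 1 = 0 + m" using k by simp
      have "d2 (V k) (V (k + 1)) = d2 (V 0) (V k)" unfolding kk Vs by (simp add: d2_anti')
      also have "\<dots> = T 0 (nat k)" using W[of 0 k] k False unfolding m_def by simp
      also have "nat k = n + 1" using k False unfolding m_def by simp
      finally show ?thesis using H4 by simp
    qed
  qed
  have B: "d2 (V k) (V (k + N + 1)) = 1" for k
  proof (rule periodic_all[OF m0, where P = "\<lambda>k. d2 (V k) (V (k + N + 1)) = 1"])
    fix k show "(d2 (V (k + m)) (V (k + m + N + 1)) = 1) = (d2 (V k) (V (k + N + 1)) = 1)"
    proof -
      have "k + m + N + 1 = (k + N + 1) + m" by simp
      then show ?thesis by (simp only: Vs d2_negl d2_negr minus_minus)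
    qed
  next
    fix k assume k: "0 \<le> k" "k < m"
    show "d2 (V k) (V (k + N + 1)) = 1"
    proof (cases "k = 0")
      case True
      then have "d2 (V k) (V (k + N + 1)) = T 0 (n + 1)" using W[of 0 "N+1"] Nn unfolding m_def
        by (simp add: nat_add_distrib)
      then show ?thesis using H4 by simp
    next
      case False
      then have kk: "k + N + 1 = (k - 1) + m" using Nn unfolding m_def by simp
      have "d2 (V k) (V (k + N + 1)) = d2 (V (k - 1)) (V (k - 1 + 1))" unfolding kk Vs
        by (simp add: d2_anti')
      then show ?thesis using A[of "k - 1"] by simp
    qed
  qed
  have C: "d2 (V k) (V (k + d)) \<ge> 1" if "1 \<le> d" "d \<le> N + 1" for k d
  proof -
    have "\<forall>d. 1 \<le> d \<and> d \<le> N + 1 \<longrightarrow> d2 (V k) (V (k + d)) \<ge> 1"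
    proof (rule periodic_all[OF m0, where P = "\<lambda>k. \<forall>d. 1 \<le> d \<and> d \<le> N + 1 \<longrightarrow> d2 (V k) (V (k + d)) \<ge> 1"])
      fix k show "(\<forall>d. 1 \<le> d \<and> d \<le> N + 1 \<longrightarrow> d2 (V (k + m)) (V (k + m + d)) \<ge> 1) =
                  (\<forall>d. 1 \<le> d \<and> d \<le> N + 1 \<longrightarrow> d2 (V k) (V (k + d)) \<ge> 1)"
      proof -
        have "d2 (V (k + m)) (V (k + m + d)) = d2 (V k) (V (k + d))" for d
        proof -
          have "k + m + d = (k + d) + m" by simp
          then show ?thesis by (simp only: Vs d2_negl d2_negr minus_minus)
        qed
        then show ?thesis by simp
      qed
    next
      fix k assume k: "0 \<le> k" "k < m"
      show "\<forall>d. 1 \<le> d \<and> d \<le> N + 1 \<longrightarrow> d2 (V k) (V (k + d)) \<ge> 1"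
      proof (intro allI impI)
        fix d assume d: "1 \<le> d \<and> d \<le> N + 1"
        show "d2 (V k) (V (k + d)) \<ge> 1"
        proof (cases "k + d < m")
          case True
          then have "d2 (V k) (V (k + d)) = T (nat k) (nat (k + d))" using W[of k "k+d"] k d by simp
          moreover have "nat k < nat (k + d)" "nat (k + d) \<le> n + 1" using True k d unfolding m_def by auto
          ultimately show ?thesis using H1 by simp
        next
          case False
          then have kk: "k + d = (k + d - m) + m" by simp
          have "d2 (V k) (V (k + d)) = d2 (V (k + d - m)) (V k)"
            by (subst kk, unfold Vs) (simp add: d2_anti')
          also have "\<dots> = T (nat (k + d - m)) (nat k)" using W[of "k + d - m" k] k d False Nn
            unfolding m_def by simp
          finally show ?thesis using H1[of "nat (k + d - m)" "nat k"] k d False Nn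
            unfolding m_def by auto
        qed
      qed
    qed
    then show ?thesis using that by blast
  qed
  define u where "u = (\<lambda>x y. d2 (V (x - r)) (V (y - s + 1)))"
  have fr: "friese (r - s - N) (r - s) u"
    unfolding friese_def
  proof (intro conjI)
    show "r - s - N < r - s" using assms(1) by simp
    show "partial_SL2_tiling (diag_band (r - s - N) (r - s)) u"
      unfolding partial_SL2_tiling_def
    proof (intro conjI)
      show "\<forall>(x, y)\<in>diag_band (r - s - N) (r - s). 1 \<le> u x y"
      proof clarify
        fix x y assume "(x, y) \<in> diag_band (r - s - N) (r - s)"
        then have h: "1 \<le> (y - s + 1) - (x - r)" "(y - s + 1) - (x - r) \<le> N + 1"
          unfolding diag_band_def by auto
        have "y - s + 1 = (x - r) + ((y - s + 1) - (x - r))" by simp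
        then show "1 \<le> u x y" unfolding u_def using C[OF h, of "x - r"] by metis
      qed
      show "\<forall>x y. (x, y) \<in> diag_band (r - s - N) (r - s) \<and> (x, y + 1) \<in> diag_band (r - s - N) (r - s) \<and>
            (x + 1, y) \<in> diag_band (r - s - N) (r - s) \<and> (x + 1, y + 1) \<in> diag_band (r - s - N) (r - s) \<longrightarrow>
            u x y * u (x + 1) (y + 1) - u x (y + 1) * u (x + 1) y = 1"
      proof (intro allI impI)
        fix x y
        have e1: "x + 1 - r = (x - r) + 1" "y + 1 - s + 1 = (y - s + 1) + 1" by simp_all
        show "u x y * u (x + 1) (y + 1) - u x (y + 1) * u (x + 1) y = 1"
          unfolding u_def e1 pluecker using A[of "x - r"] A[of "y - s + 1"] by (simp only: mult_1_left)
      qed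
    qed
    show "\<forall>x y. x - y = r - s - N \<or> x - y = r - s \<longrightarrow> u x y = 1"
    proof (intro allI impI)
      fix x y assume "x - y = r - s - N \<or> x - y = r - s"
      then show "u x y = 1"
      proof
        assume "x - y = r - s - N"
        then have "y - s + 1 = (x - r) + N + 1" by simp
        then show ?thesis unfolding u_def using B by simp
      next
        assume "x - y = r - s"
        then have "y - s + 1 = (x - r) + 1" by simp
        then show ?thesis unfolding u_def using A by simp
      qed
    qed
  qed
  have ag: "\<forall>(x, y) \<in> F. u x y = t x y"
  proof clarify
    fix x y assume "(x, y) \<in> F"
    then have h: "0 \<le> x - r" "x - r < y - s + 1" "y - s + 1 < m" using assms(2) Nn unfolding m_def by auto
    have "u x y = T (nat (x - r)) (nat (y - s + 1))" unfolding u_def using W[OF h] .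
    also have "\<dots> = t x y" unfolding T_def using h by simp
    finally show "u x y = t x y" .
  qed
  have "diag_band (r - s - N) (r - s) = D" using assms(3) unfolding diag_band_def by simp
  then show ?thesis using fr ag by blast
qed

end
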